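(* Let $k\ge 3$ and let $\sigma$ be a (possibly vincular) pattern of length $k$ whose underlying permutation is $k(k-1)\cdots 1$ (with any choice of underlined entries). Then for every positive integer $n$, \[\mathrm{Sort}_n(\mathrm{SC}_\sigma)=\mathrm{Av}_n(\mathrm{rev}(\sigma),132).\]
   Context: $\mathfrak S_n$ is the set of permutations of $\{1,\dots,n\}$. A vincular pattern is a permutation some of whose entries are underlined; a sequence contains it if it has a subsequence with the same relative order in which entries corresponding to adjacent underlined entries of the pattern occupy consecutive positions of the sequence; otherwise it avoids it. $\mathrm{Av}_n(\dots)$ is the set of permutations in $\mathfrak S_n$ avoiding all listed patterns. $\mathrm{rev}(\sigma)$ is the reverse of $\sigma$, with the underlining reversed accordingly. For a pattern $\sigma$, the $\sigma$-avoiding stack-sorting map $\mathrm{SC}_\sigma$ acts on $\tau$: read entries left to right; when the next entry $x$ is read, if pushing $x$ yields a stack whose entries read top to bottom (adjacency in the stack counting as consecutive positions) avoid $\sigma$, push $x$; otherwise pop the top stack entry to the output and repeat. At the end pop all remaining entries to the output; the output is $\mathrm{SC}_\sigma(\tau)$. West's stack-sorting map is $s=\mathrm{SC}_{21}$. $\mathrm{Sort}_n(\mathrm{SC}_\sigma)=\{\tau\in\mathfrak S_n : s(\mathrm{SC}_\sigma(\tau))=12\cdots n\}$. *)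

theory Defs
  imports Main
begin

text \<open>A (vincular) pattern is a pair (p, U): p is the underlying permutation
  (a list of the numbers 1..k) and U is the set of (0-based) positions of
  underlined entries.\<close>
type_synonym vpat = "nat list \<times> nat set"

definition perms :: "nat \<Rightarrow> nat list set" where
  "perms n = {xs. distinct xs \<and> set xs = {1..n}}"

definition vcontains :: "nat list \<Rightarrow> vpat \<Rightarrow> bool" where
  "vcontains xs \<sigma> \<longleftrightarrow> (case \<sigma> of (p, U) \<Rightarrow>
     (\<exists>f :: nat \<Rightarrow> nat.
        strict_mono_on {0..<length p} f \<and>
        (\<forall>i<length p. f i < length xs) \<and>
        (\<forall>i<length p. \<forall>j<length p. (xs ! f i < xs ! f j \<longleftrightarrow> p ! i < p ! j)) \<and>
        (\<forall>i. Suc i < length p \<and> i \<in> U \<and> Suc i \<in> U \<longrightarrow> f (Suc i) = Suc (f i))))"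

definition vavoids :: "nat list \<Rightarrow> vpat \<Rightarrow> bool" where
  "vavoids xs \<sigma> \<longleftrightarrow> \<not> vcontains xs \<sigma>"

definition vrev :: "vpat \<Rightarrow> vpat" where
  "vrev \<sigma> = (case \<sigma> of (p, U) \<Rightarrow> (rev p, (\<lambda>i. length p - 1 - i) ` U))"

definition Av :: "nat \<Rightarrow> vpat list \<Rightarrow> nat list set" where
  "Av n ps = {\<tau> \<in> perms n. \<forall>\<sigma>\<in>set ps. vavoids \<tau> \<sigma>}"

text \<open>Arguments: pattern, remaining
  input, current stack (listed top to bottom).
  If the stack is empty the entry is pushed (a one-entry stack cannot contain
  a pattern of length at least 2).\<close>
fun sc_aux :: "vpat \<Rightarrow> nat list \<Rightarrow> nat list \<Rightarrow> nat list" where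
  "sc_aux \<sigma> [] st = st"
| "sc_aux \<sigma> (x # xs) [] = sc_aux \<sigma> xs [x]"
| "sc_aux \<sigma> (x # xs) (y # st) =
     (if vavoids (x # y # st) \<sigma> then sc_aux \<sigma> xs (x # y # st)
      else y # sc_aux \<sigma> (x # xs) st)"

definition SC :: "vpat \<Rightarrow> nat list \<Rightarrow> nat list" where
  "SC \<sigma> \<tau> = sc_aux \<sigma> \<tau> []"

definition west_s :: "nat list \<Rightarrow> nat list" where
  "west_s = SC ([2, 1], {})"

definition Sort :: "nat \<Rightarrow> (nat list \<Rightarrow> nat list) \<Rightarrow> nat list set" where
  "Sort n F = {\<tau> \<in> perms n. west_s (F \<tau>) = [1..<n+1]}"

end

theory Submission
  imports Defs "HOL-Library.Sublist" "HOL-Library.Multiset"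
begin

lemma vcontainsE:
  assumes "vcontains L (p,U)"
  obtains f where "strict_mono_on {0..<length p} f" "\<forall>i<length p. f i < length L"
    "\<forall>i<length p. \<forall>j<length p. (L ! f i < L ! f j \<longleftrightarrow> p ! i < p ! j)"
    "\<forall>i. Suc i < length p \<and> i \<in> U \<and> Suc i \<in> U \<longrightarrow> f (Suc i) = Suc (f i)"
  using assms unfolding vcontains_def by auto

lemma vcontainsI:
  assumes "strict_mono_on {0..<length p} f" "\<forall>i<length p. f i < length L"
    "\<forall>i<length p. \<forall>j<length p. (L ! f i < L ! f j \<longleftrightarrow> p ! i < p ! j)"
    "\<forall>i. Suc i < length p \<and> i \<in> U \<and> Suc i \<in> U \<longrightarrow> f (Suc i) = Suc (f i)"
  shows "vcontains L (p,U)"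
  using assms unfolding vcontains_def by auto

lemma smD: "strict_mono_on {0..<m} (f::nat\<Rightarrow>nat) \<Longrightarrow> (i::nat) < j \<Longrightarrow> j < m \<Longrightarrow> f i < f j"
  unfolding strict_mono_on_def apply (erule allE[of _ i], erule allE[of _ j]) by auto

lemma smI: "(\<And>i j. (i::nat) < j \<Longrightarrow> j < m \<Longrightarrow> f i < f j) \<Longrightarrow> strict_mono_on {0..<m} f"
  unfolding strict_mono_on_def by auto

lemma vc_len3: "vcontains L (p,U) \<Longrightarrow> 3 \<le> length p \<Longrightarrow> 3 \<le> length L"
proof -
  assume a: "vcontains L (p,U)" "3 \<le> length p"
  then obtain f where f: "strict_mono_on {0..<length p} f" "\<forall>i<length p. f i < length L"
    by (auto elim: vcontainsE)
  have "f 0 < f 1" "f 1 < f 2" using smD[OF f(1)] a(2) by auto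
  moreover have "f 2 < length L" using f(2) a(2) by auto
  ultimately show ?thesis by linarith
qed

lemma vc_append: "vcontains ys (p,U) \<Longrightarrow> vcontains (xs @ ys) (p,U)"
proof -
  assume "vcontains ys (p,U)"
  then obtain f where f: "strict_mono_on {0..<length p} f" "\<forall>i<length p. f i < length ys"
    "\<forall>i<length p. \<forall>j<length p. (ys ! f i < ys ! f j \<longleftrightarrow> p ! i < p ! j)"
    "\<forall>i. Suc i < length p \<and> i \<in> U \<and> Suc i \<in> U \<longrightarrow> f (Suc i) = Suc (f i)"
    by (rule vcontainsE)
  show ?thesis
    apply (rule vcontainsI[where f="\<lambda>i. f i + length xs"])
    using f by (auto simp: strict_mono_on_def nth_append)
qed

lemma va_append: "vavoids (xs @ ys) \<sigma> \<Longrightarrow> vavoids ys \<sigma>"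
  unfolding vavoids_def by (cases \<sigma>) (auto dest: vc_append)

lemma vc_rev:
  assumes U: "U \<subseteq> {0..<length p}" and c: "vcontains xs (p,U)"
  shows "vcontains (rev xs) (rev p, (\<lambda>i. length p - 1 - i) ` U)"
proof -
  obtain f where f: "strict_mono_on {0..<length p} f" "\<forall>i<length p. f i < length xs"
    "\<forall>i<length p. \<forall>j<length p. (xs ! f i < xs ! f j \<longleftrightarrow> p ! i < p ! j)"
    "\<forall>i. Suc i < length p \<and> i \<in> U \<and> Suc i \<in> U \<longrightarrow> f (Suc i) = Suc (f i)"
    using c by (rule vcontainsE)
  define lp where "lp = length p"
  define g where "g i = length xs - 1 - f (lp - 1 - i)" for i
  show ?thesis
  proof (rule vcontainsI[where f=g])
    show "strict_mono_on {0..<length (rev p)} g"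
      unfolding g_def
    proof (rule smI)
      fix i j assume "i < j" "j < length (rev p)"
      then have "f (lp - 1 - j) < f (lp - 1 - i)" "f (lp - 1 - i) < length xs"
        using smD[OF f(1)] f(2) by (auto simp: lp_def)
      then show "length xs - 1 - f (lp - 1 - i) < length xs - 1 - f (lp - 1 - j)" by linarith
    qed
    show "\<forall>i<length (rev p). g i < length (rev xs)"
      using f(2) by (auto simp: g_def lp_def)
    show "\<forall>i<length (rev p). \<forall>j<length (rev p). (rev xs ! g i < rev xs ! g j) = (rev p ! i < rev p ! j)"
    proof (intro allI impI)
      fix i j assume ij: "i < length (rev p)" "j < length (rev p)"
      have e: "rev xs ! g t = xs ! f (lp - 1 - t)" if "t < lp" for t
      proof -
        have "f (lp - 1 - t) < length xs" using f(2) that by (auto simp: lp_def)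
        then show ?thesis by (simp add: g_def rev_nth Suc_diff_Suc)
      qed
      have e2: "rev p ! t = p ! (lp - 1 - t)" if "t < lp" for t
        using that by (simp add: rev_nth lp_def)
      show "(rev xs ! g i < rev xs ! g j) = (rev p ! i < rev p ! j)"
        using ij e e2 f(3) by (auto simp: lp_def)
    qed
    show "\<forall>i. Suc i < length (rev p) \<and> i \<in> (\<lambda>i. length p - 1 - i) ` U \<and> Suc i \<in> (\<lambda>i. length p - 1 - i) ` U \<longrightarrow> g (Suc i) = Suc (g i)"
    proof (intro allI impI)
      fix i assume h: "Suc i < length (rev p) \<and> i \<in> (\<lambda>i. length p - 1 - i) ` U \<and> Suc i \<in> (\<lambda>i. length p - 1 - i) ` U"
      then obtain u1 u2 where u: "u1 \<in> U" "u2 \<in> U" "i = lp - 1 - u1" "Suc i = lp - 1 - u2"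
        by (auto simp: lp_def)
      have "u1 < lp" "u2 < lp" using u U by (auto simp: lp_def)
      then have u1: "u1 = Suc u2" "Suc u2 < lp" using u h by (auto simp: lp_def)
      then have "f u1 = Suc (f u2)" using f(4) u by (auto simp: lp_def)
      moreover have "f u1 < length xs" using f(2) u1 by (auto simp: lp_def)
      moreover have "lp - 1 - Suc i = u2" "lp - 1 - i = u1" using u u1 by auto
      ultimately show "g (Suc i) = Suc (g i)" unfolding g_def by simp
    qed
  qed
qed

lemma mset_sc: "mset (sc_aux \<sigma> xs st) = mset xs + mset st"
  by (induction \<sigma> xs st rule: sc_aux.induct) auto

lemma set_sc: "set (sc_aux \<sigma> xs st) = set xs \<union> set st"
  by (induction \<sigma> xs st rule: sc_aux.induct) auto

lemma nopop: "vavoids (rev xs @ st) \<sigma> \<Longrightarrow> sc_aux \<sigma> xs st = rev xs @ st"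
proof (induction \<sigma> xs st rule: sc_aux.induct)
  case (1 \<sigma> st) then show ?case by simp
next
  case (2 \<sigma> x xs) then show ?case by simp
next
  case (3 \<sigma> x xs y st)
  have "vavoids (x # y # st) \<sigma>" using 3(3) va_append[of "rev xs" "x # y # st"] by simp
  then show ?case using 3 by simp
qed

lemma lemD: "st = a @ x # b \<Longrightarrow> d \<in> set b \<Longrightarrow> subseq [x,d] (sc_aux \<sigma> xs st)"
proof (induction \<sigma> xs st arbitrary: a rule: sc_aux.induct)
  case (1 \<sigma> st)
  then have "subseq [x,d] (x # b)" by (simp add: subseq_singleton_left)
  then show ?case using 1 by auto
next
  case (2 \<sigma> x xs) then show ?case by simp
next
  case (3 \<sigma> x' xs y st)
  show ?case
  proof (cases "vavoids (x' # y # st) \<sigma>")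
    case True
    then have e: "sc_aux \<sigma> (x'#xs) (y#st) = sc_aux \<sigma> xs (x'#y#st)" by simp
    have "subseq [x,d] (sc_aux \<sigma> xs (x'#y#st))" using 3(1)[of "x' # a"] 3(3,4) True by simp
    then show ?thesis using e by simp
  next
    case False
    show ?thesis
    proof (cases a)
      case Nil
      then have "d \<in> set (sc_aux \<sigma> (x' # xs) st)" using 3(3,4) by (simp add: set_sc)
      then show ?thesis using False Nil 3(3) by (simp add: subseq_singleton_left)
    next
      case (Cons a1 a')
      then have "subseq [x,d] (sc_aux \<sigma> (x' # xs) st)" using 3(2)[of a'] False 3(3,4) by simp
      then show ?thesis using False by (simp add: subseq_Cons')
    qed
  qed
qed

lemma vc_transfer:
  assumes f3: "\<forall>i<length p. \<forall>j<length p. (L ! f i < L ! f j \<longleftrightarrow> p ! i < p ! j)"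
  and g: "strict_mono_on {0..<length p} g" "\<forall>i<length p. g i < length L' \<and> L' ! (g i) = L ! (f i)"
      "\<forall>i. Suc i < length p \<and> i \<in> U \<and> Suc i \<in> U \<longrightarrow> g (Suc i) = Suc (g i)"
  shows "vcontains L' (p,U)"
  apply (rule vcontainsI[where f=g])
  using g f3 by auto

lemma find_d:
  assumes lp: "3 \<le> length p" "p!2 < p!1" "p!1 < p!0"
  and c: "vcontains (x#z#st) (p,U)" and a1: "vavoids (z#st) (p,U)" and a2: "vavoids (x#st) (p,U)"
  shows "\<exists>d\<in>set st. d < z \<and> z < x"
proof -
  obtain f where f: "strict_mono_on {0..<length p} f" "\<forall>i<length p. f i < length (x#z#st)"
    "\<forall>i<length p. \<forall>j<length p. ((x#z#st) ! f i < (x#z#st) ! f j \<longleftrightarrow> p ! i < p ! j)"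
    "\<forall>i. Suc i < length p \<and> i \<in> U \<and> Suc i \<in> U \<longrightarrow> f (Suc i) = Suc (f i)"
    using c by (rule vcontainsE)
  have mono: "f i \<le> f j" if "i \<le> j" "j < length p" for i j
    using smD[OF f(1), of i j] that by (cases "i = j") auto
  have f0: "f 0 = 0"
  proof (rule ccontr)
    assume h: "f 0 \<noteq> 0"
    have pos: "1 \<le> f i" if "i < length p" for i using mono[of 0 i] that h by auto
    have "vcontains (z#st) (p,U)"
    proof (rule vc_transfer[OF f(3), where g="\<lambda>i. f i - 1"])
      show "strict_mono_on {0..<length p} (\<lambda>i. f i - 1)"
        apply (rule smI) using smD[OF f(1)] pos by (metis diff_less_mono order_less_trans)
      show "\<forall>i<length p. f i - 1 < length (z # st) \<and> (z # st) ! (f i - 1) = (x # z # st) ! f i"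
      proof (intro allI impI)
        fix i assume i: "i < length p"
        then obtain m where "f i = Suc m" using pos[OF i] by (cases "f i") auto
        then show "f i - 1 < length (z # st) \<and> (z # st) ! (f i - 1) = (x # z # st) ! f i"
          using f(2) i by fastforce
      qed
      show "\<forall>i. Suc i < length p \<and> i \<in> U \<and> Suc i \<in> U \<longrightarrow> f (Suc i) - 1 = Suc (f i - 1)"
      proof (intro allI impI)
        fix i assume hi: "Suc i < length p \<and> i \<in> U \<and> Suc i \<in> U"
        then have "f (Suc i) = Suc (f i)" using f(4) by blast
        moreover have "1 \<le> f i" using pos hi by simp
        ultimately show "f (Suc i) - 1 = Suc (f i - 1)" by simp
      qed
    qed
    then show False using a1 by (simp add: vavoids_def)
  qed
  have f1: "f 1 = 1"
  proof (rule ccontr)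
    assume h: "f 1 \<noteq> 1"
    have "f 0 < f 1" using smD[OF f(1), of 0 1] lp by auto
    then have pos: "2 \<le> f i" if "1 \<le> i" "i < length p" for i using mono[of 1 i] that h f0 by auto
    have "vcontains (x#st) (p,U)"
    proof (rule vc_transfer[OF f(3), where g="\<lambda>i. if i = 0 then 0 else f i - 1"])
      show "strict_mono_on {0..<length p} (\<lambda>i. if i = 0 then 0 else f i - 1)"
      proof (rule smI)
        fix i j assume ij: "i < j" "j < length p"
        have "2 \<le> f j" using pos[of j] ij by simp
        moreover have "i \<noteq> 0 \<Longrightarrow> 2 \<le> f i \<and> f i < f j" using pos[of i] ij smD[OF f(1), of i j] by simp
        ultimately show "(if i = 0 then 0 else f i - 1) < (if j = 0 then 0 else f j - 1)"
          using ij by auto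
      qed
      show "\<forall>i<length p. (if i = 0 then 0 else f i - 1) < length (x # st) \<and> (x # st) ! (if i = 0 then 0 else f i - 1) = (x # z # st) ! f i"
      proof (intro allI impI)
        fix i assume i: "i < length p"
        show "(if i = 0 then 0 else f i - 1) < length (x # st) \<and> (x # st) ! (if i = 0 then 0 else f i - 1) = (x # z # st) ! f i"
        proof (cases "i = 0")
          case True then show ?thesis using f0 by simp
        next
          case False
          have "2 \<le> f i" using pos[of i] i False by simp
          then obtain m where "f i = Suc (Suc m)" by (metis add_2_eq_Suc le_Suc_ex)
          then show ?thesis using f(2) i False by fastforce
        qed
      qed
      show "\<forall>i. Suc i < length p \<and> i \<in> U \<and> Suc i \<in> U \<longrightarrow> (if Suc i = 0 then 0 else f (Suc i) - 1) = Suc (if i = 0 then 0 else f i - 1)"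
      proof (intro allI impI)
        fix i assume hi: "Suc i < length p \<and> i \<in> U \<and> Suc i \<in> U"
        then have e: "f (Suc i) = Suc (f i)" using f(4) by blast
        show "(if Suc i = 0 then 0 else f (Suc i) - 1) = Suc (if i = 0 then 0 else f i - 1)"
        proof (cases "i = 0")
          case True then show ?thesis using e f0 h by simp
        next
          case False then show ?thesis using e pos[of i] hi by simp
        qed
      qed
    qed
    then show False using a2 by (simp add: vavoids_def)
  qed
  have "f 1 < f 2" using smD[OF f(1), of 1 2] lp by auto
  then have f2: "2 \<le> f 2" "f 2 < length st + 2" using f1 f(2) lp by auto
  define d where "d = st ! (f 2 - 2)"
  have dst: "d \<in> set st" using f2 by (simp add: d_def)
  have dv: "(x#z#st) ! f 2 = d" using f2 unfolding d_def
  proof -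
    have "f 2 = Suc (Suc (f 2 - 2))" using f2 by arith
    then show "(x#z#st) ! f 2 = st ! (f 2 - 2)" by (metis nth_Cons_Suc)
  qed
  have "((x#z#st) ! f 2 < (x#z#st) ! f 1) = (p!2 < p!1)" using f(3)[rule_format, of 2 1] lp by simp
  then have "d < z" using dv f1 lp by simp
  moreover have "((x#z#st) ! f 1 < (x#z#st) ! f 0) = (p!1 < p!0)" proof -
    have "1 < length p" "0 < length p" using lp by auto
    then show ?thesis using f(3) by blast
  qed
  then have "z < x" using f0 f1 lp by simp
  ultimately show ?thesis using dst by blast
qed

definition c231s :: "nat list \<Rightarrow> bool" where
  "c231s L \<longleftrightarrow> (\<exists>a b c. a < b \<and> b < c \<and> subseq [b,c,a] L)"

lemma c231s_Cons: "c231s L \<Longrightarrow> c231s (z # L)"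
  unfolding c231s_def by (meson list_emb_Cons)

lemma lemC:
  assumes lp: "3 \<le> length p" "p!2 < p!1" "p!1 < p!0"
  shows "vavoids (z#st) (p,U) \<Longrightarrow> vcontains (x#z#st) (p,U) \<Longrightarrow> c231s (z # sc_aux (p,U) (x#xs) st)"
proof (induction st arbitrary: z)
  case Nil
  then show ?case using vc_len3[OF Nil(2) lp(1)] by simp
next
  case (Cons y st')
  show ?case
  proof (cases "vavoids (x#y#st') (p,U)")
    case True
    obtain d where d: "d \<in> set (y#st')" "d < z" "z < x"
      using find_d[OF lp Cons(3) Cons(2) True] by blast
    have "subseq [x,d] (sc_aux (p,U) xs (x#y#st'))"
      using lemD[of "x#y#st'" "[]" x "y#st'" d] d(1) by simp
    then have "subseq [z,x,d] (z # sc_aux (p,U) (x#xs) (y#st'))" using True by simp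
    then show ?thesis unfolding c231s_def using d by blast
  next
    case False
    have "vavoids (y#st') (p,U)" using Cons(2) va_append[of "[z]" "y#st'"] by simp
    moreover have "vcontains (x#y#st') (p,U)" using False by (simp add: vavoids_def)
    ultimately have "c231s (y # sc_aux (p,U) (x#xs) st')" using Cons(1) by blast
    then show ?thesis using False by (simp add: c231s_Cons)
  qed
qed

lemma lemB:
  assumes lp: "3 \<le> length p" "p!2 < p!1" "p!1 < p!0"
  shows "vavoids st (p,U) \<Longrightarrow> vcontains (rev xs @ st) (p,U) \<Longrightarrow> c231s (sc_aux (p,U) xs st)"
proof (induction xs arbitrary: st)
  case Nil
  then show ?case by (simp add: vavoids_def)
next
  case (Cons x xs)
  show ?case
  proof (cases st)
    case Nil
    have "vavoids [x] (p,U)" using vc_len3[of "[x]" p U] lp by (auto simp: vavoids_def)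
    then show ?thesis using Cons Nil by simp
  next
    case (Cons y st')
    show ?thesis
    proof (cases "vavoids (x#y#st') (p,U)")
      case True
      then show ?thesis using Cons.IH[of "x#y#st'"] Cons.prems \<open>st = y#st'\<close> by simp
    next
      case False
      have "vavoids (y#st') (p,U)" using Cons.prems \<open>st = y#st'\<close> by simp
      moreover have "vcontains (x#y#st') (p,U)" using False by (simp add: vavoids_def)
      ultimately have "c231s (y # sc_aux (p,U) (x#xs) st')" using lemC[OF lp] by blast
      then show ?thesis using False \<open>st = y#st'\<close> by simp
    qed
  qed
qed

lemma all2: "(\<forall>t<(2::nat). P t) \<longleftrightarrow> P 0 \<and> P 1"
  by (auto simp: less_Suc_eq numeral_2_eq_2)
lemma all3: "(\<forall>t<(3::nat). P t) \<longleftrightarrow> P 0 \<and> P 1 \<and> P 2"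
  by (auto simp: less_Suc_eq numeral_3_eq_3 numeral_2_eq_2)

lemma vc21: "vcontains L ([2,1],{}) \<longleftrightarrow> (\<exists>i j. i < j \<and> j < length L \<and> L!j < L!i)"
proof
  assume "vcontains L ([2,1],{})"
  then obtain f where f: "strict_mono_on {0..<length [2::nat,1]} f" "\<forall>i<length [2::nat,1]. f i < length L"
    "\<forall>i<length [2::nat,1]. \<forall>j<length [2::nat,1]. (L ! f i < L ! f j \<longleftrightarrow> [2::nat,1] ! i < [2,1] ! j)"
    by (rule vcontainsE)
  have "f 0 < f 1" using smD[OF f(1), of 0 1] by simp
  moreover have "f 1 < length L" using f(2) by simp
  moreover have "L ! f 1 < L ! f 0" using f(3) by simp
  ultimately show "\<exists>i j. i < j \<and> j < length L \<and> L!j < L!i" by blast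
next
  assume "\<exists>i j. i < j \<and> j < length L \<and> L!j < L!i"
  then obtain i j where ij: "i < j" "j < length L" "L!j < L!i" by blast
  show "vcontains L ([2,1],{})"
    apply (rule vcontainsI[where f="\<lambda>t. if t = 0 then i else j"])
    subgoal by (rule smI) (use ij in \<open>auto simp: less_Suc_eq\<close>)
    subgoal using ij by (simp add: all2)
    subgoal using ij by (simp add: all2)
    subgoal by simp
    done
qed

lemma va21: "vavoids L ([2,1],{}) \<longleftrightarrow> sorted L"
  unfolding vavoids_def vc21 sorted_iff_nth_mono_less by (metis leD leI)

abbreviation s21 :: vpat where "s21 \<equiv> ([2,1],{})"

lemma K1a: "\<sigma> = s21 \<Longrightarrow> sorted st \<Longrightarrow> b \<in> set st \<Longrightarrow> subseq [c,a] xs \<Longrightarrow> a < b \<Longrightarrow> b < c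
   \<Longrightarrow> \<not> sorted (sc_aux \<sigma> xs st)"
proof (induction \<sigma> xs st rule: sc_aux.induct)
  case (1 \<sigma> st) then show ?case by simp
next
  case (2 \<sigma> x xs) then show ?case by simp
next
  case (3 \<sigma> x xs y st)
  show ?case
  proof (cases "sorted (x#y#st)")
    case True
    have "x \<noteq> c"
    proof
      assume "x = c"
      have "y \<le> b" using 3(4,5) by auto
      then show False using True \<open>x = c\<close> 3(8) by simp
    qed
    then have sc: "subseq [c,a] xs" using 3(6) by simp
    have v: "vavoids (x#y#st) \<sigma>" using True 3(3) va21 by simp
    have e: "sc_aux \<sigma> (x#xs) (y#st) = sc_aux \<sigma> xs (x#y#st)" using v by simp
    have b': "b \<in> set (x#y#st)" using 3(5) by simp
    have "\<not> sorted (sc_aux \<sigma> xs (x#y#st))" by (rule 3(1)[OF v 3(3) True b' sc 3(7) 3(8)])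
    then show ?thesis using e by simp
  next
    case False
    then have v: "\<not> vavoids (x#y#st) \<sigma>" using 3(3) va21 by simp
    then have e: "sc_aux \<sigma> (x#xs) (y#st) = y # sc_aux \<sigma> (x#xs) st" by simp
    show ?thesis
    proof (cases "y = b")
      case True
      have "subseq [a] (x#xs)" using 3(6) by (rule subseq_Cons')
      then have "a \<in> set (x#xs)" unfolding subseq_singleton_left .
      then have "a \<in> set (sc_aux \<sigma> (x#xs) st)" by (auto simp: set_sc)
      then have "\<not> sorted (y # sc_aux \<sigma> (x#xs) st)" using True 3(7) by (auto simp: not_le)
      then show ?thesis by (subst e)
    next
      case False
      have bs: "b \<in> set st" using 3(5) False by simp
      have ss: "sorted st" using 3(4) by simp
      have "\<not> sorted (sc_aux \<sigma> (x#xs) st)" by (rule 3(2)[OF v 3(3) ss bs 3(6) 3(7) 3(8)])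
      then show ?thesis using e by simp
    qed
  qed
qed

lemma K1b: "\<sigma> = s21 \<Longrightarrow> sorted st \<Longrightarrow> subseq [b,c,a] xs \<Longrightarrow> a < b \<Longrightarrow> b < c
   \<Longrightarrow> \<not> sorted (sc_aux \<sigma> xs st)"
proof (induction \<sigma> xs st rule: sc_aux.induct)
  case (1 \<sigma> st) then show ?case by simp
next
  case (2 \<sigma> x xs)
  show ?case
  proof (cases "x = b")
    case True
    then have "subseq [c,a] xs" using 2(4) by simp
    then show ?thesis using K1a[of \<sigma> "[x]" b c a xs] True 2 by simp
  next
    case False
    then show ?thesis using 2 by simp
  qed
next
  case (3 \<sigma> x xs y st)
  show ?case
  proof (cases "sorted (x#y#st)")
    case True
    then have e: "sc_aux \<sigma> (x#xs) (y#st) = sc_aux \<sigma> xs (x#y#st)" using 3(3) va21 by simp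
    show ?thesis
    proof (cases "x = b")
      case b: True
      then have "subseq [c,a] xs" using 3(5) by simp
      then show ?thesis using K1a[of \<sigma> "x#y#st" b c a xs] b True 3(3,6,7) e by simp
    next
      case False
      then show ?thesis using 3 True e va21 by simp
    qed
  next
    case False
    then have v: "\<not> vavoids (x#y#st) \<sigma>" using 3(3) va21 by simp
    then have e: "sc_aux \<sigma> (x#xs) (y#st) = y # sc_aux \<sigma> (x#xs) st" by simp
    have "\<not> sorted (sc_aux \<sigma> (x#xs) st)" using 3(2) False 3 va21 by simp
    then show ?thesis using e by simp
  qed
qed

lemma K2: "\<sigma> = s21 \<Longrightarrow> sorted st \<Longrightarrow> subseq (rev st @ xs) \<pi> \<Longrightarrow> \<not> c231s \<pi>
   \<Longrightarrow> sorted (sc_aux \<sigma> xs st)"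
proof (induction \<sigma> xs st rule: sc_aux.induct)
  case (1 \<sigma> st) then show ?case by simp
next
  case (2 \<sigma> x xs) then show ?case by simp
next
  case (3 \<sigma> x xs y st)
  show ?case
  proof (cases "sorted (x#y#st)")
    case True
    then have e: "sc_aux \<sigma> (x#xs) (y#st) = sc_aux \<sigma> xs (x#y#st)" using 3(3) va21 by simp
    then show ?thesis using 3 True va21 by simp
  next
    case False
    then have v: "\<not> vavoids (x#y#st) \<sigma>" using 3(3) va21 by simp
    then have e: "sc_aux \<sigma> (x#xs) (y#st) = y # sc_aux \<sigma> (x#xs) st" by simp
    have yx: "y < x" using False 3(4) by auto
    have s1: "subseq (rev st @ x # xs) (rev st @ y # x # xs)"
      unfolding subseq_append' by (rule list_emb_Cons) (rule subseq_order.refl)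
    have s2: "subseq (rev st @ y # x # xs) \<pi>" using 3(5) by simp
    have "sorted (sc_aux \<sigma> (x#xs) st)"
      using 3(2) False 3(3,4,6) va21 subseq_order.trans[OF s1 s2] by simp
    moreover have "\<forall>a\<in>set (sc_aux \<sigma> (x#xs) st). y \<le> a"
    proof
      fix a assume "a \<in> set (sc_aux \<sigma> (x#xs) st)"
      then have "a \<in> set (x#xs) \<or> a \<in> set st" by (simp add: set_sc)
      moreover have "a \<in> set st \<Longrightarrow> y \<le> a" using 3(4) by simp
      moreover have "a \<in> set xs \<Longrightarrow> y \<le> a"
      proof (rule ccontr)
        assume a: "a \<in> set xs" "\<not> y \<le> a"
        have "subseq [y,x,a] (y # x # xs)" using a(1) by (simp add: subseq_singleton_left)
        then have "subseq [y,x,a] (rev st @ y # x # xs)" by (rule list_emb_append2)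
        then have "subseq [y,x,a] \<pi>" using s2 by (rule subseq_order.trans)
        then have "c231s \<pi>" unfolding c231s_def using a(2) yx not_le by blast
        then show False using 3(6) by simp
      qed
      ultimately show "y \<le> a" using yx by auto
    qed
    ultimately show ?thesis using e by simp
  qed
qed

lemma sorted_nil: "sorted []" by simp

lemma knuth: "sorted (west_s L) \<longleftrightarrow> \<not> c231s L"
proof
  assume s: "sorted (west_s L)"
  show "\<not> c231s L"
  proof
    assume "c231s L"
    then obtain a b c where abc: "a < b" "b < c" "subseq [b,c,a] L" unfolding c231s_def by blast
    have "\<not> sorted (sc_aux s21 L [])" by (rule K1b[OF refl sorted_nil abc(3) abc(1,2)])
    then show False using s unfolding west_s_def SC_def by simp
  qed
next
  assume h: "\<not> c231s L"
  have e: "rev [] @ L = L" by simp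
  have ss: "subseq (rev [] @ L) L" by (subst e) (rule subseq_order.refl)
  have "sorted (sc_aux s21 L [])" by (rule K2[of s21 "[]" L L, OF refl sorted_nil ss h])
  then show "sorted (west_s L)" unfolding west_s_def SC_def .
qed

lemma subseq_rev: "subseq xs ys \<Longrightarrow> subseq (rev xs) (rev ys)"
proof (induction rule: list_emb.induct)
  case (list_emb_Nil ys) then show ?case by simp
next
  case (list_emb_Cons xs ys y) then show ?case by (simp add: list_emb_prefix)
next
  case (list_emb_Cons2 x y xs ys)
  then show ?case by (simp add: list_emb_append_mono)
qed

lemma subseq_Cons_pos: "subseq (x#ys) xs \<Longrightarrow> \<exists>i<length xs. xs!i = x \<and> subseq ys (drop (Suc i) xs)"
proof -
  assume "subseq (x#ys) xs"
  then obtain us v vs where "xs = us @ v # vs" "x = v" "subseq ys vs" by (auto dest: list_emb_ConsD)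
  then show ?thesis by (intro exI[of _ "length us"]) auto
qed

lemma subseq_Cons_pos2: "i < length xs \<Longrightarrow> subseq ys (drop (Suc i) xs) \<Longrightarrow> subseq (xs!i # ys) xs"
proof -
  assume a: "i < length xs" "subseq ys (drop (Suc i) xs)"
  have "subseq (xs!i # ys) (xs!i # drop (Suc i) xs)" using a(2) by simp
  then have "subseq (xs!i # ys) (take i xs @ xs!i # drop (Suc i) xs)" by (rule list_emb_append2)
  then show ?thesis using id_take_nth_drop[OF a(1)] by simp
qed

lemma pos3: "i < j \<Longrightarrow> j < l \<Longrightarrow> l < length xs \<Longrightarrow> subseq [xs!i, xs!j, xs!l] xs"
proof -
  assume a: "i < j" "j < l" "l < length xs"
  have q: "(drop (Suc j) xs) ! (l - Suc j) = xs!l" "l - Suc j < length (drop (Suc j) xs)" using a by auto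
  have "xs!l \<in> set (drop (Suc j) xs)" using nth_mem[OF q(2)] unfolding q(1) .
  then have s1: "subseq [xs!l] (drop (Suc j) xs)" by (simp add: subseq_singleton_left)
  define d where "d = drop (Suc i) xs"
  have jd: "j - Suc i < length d" "d ! (j - Suc i) = xs ! j" "drop (Suc (j - Suc i)) d = drop (Suc j) xs"
    using a by (auto simp: d_def)
  have "subseq [xs!j, xs!l] d" using subseq_Cons_pos2[OF jd(1), of "[xs!l]"] s1 jd by simp
  then show ?thesis using subseq_Cons_pos2[of i xs "[xs!j, xs!l]"] a by (simp add: d_def)
qed

lemma pos3': "subseq [a,b,c] xs \<Longrightarrow> \<exists>i j l. i < j \<and> j < l \<and> l < length xs \<and> xs!i = a \<and> xs!j = b \<and> xs!l = c"
proof -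
  assume "subseq [a,b,c] xs"
  then obtain i where i: "i < length xs" "xs!i = a" "subseq [b,c] (drop (Suc i) xs)"
    using subseq_Cons_pos[OF \<open>subseq [a,b,c] xs\<close>] by blast
  obtain j' where j: "j' < length (drop (Suc i) xs)" "(drop (Suc i) xs)!j' = b" "subseq [c] (drop (Suc j') (drop (Suc i) xs))"
    using subseq_Cons_pos[OF i(3)] by blast
  have "c \<in> set (drop (Suc j') (drop (Suc i) xs))" using j(3) unfolding subseq_singleton_left .
  then obtain l' where l: "l' < length (drop (Suc j') (drop (Suc i) xs))" "(drop (Suc j') (drop (Suc i) xs))!l' = c"
    by (auto simp: in_set_conv_nth)
  have d1: "drop (Suc i) xs ! j' = xs ! (Suc i + j')" "Suc i + j' < length xs" using i(1) j(1) by auto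
  have e2: "drop (Suc j') (drop (Suc i) xs) = drop (Suc (Suc i + j')) xs" by (simp add: add.commute)
  have d2: "drop (Suc (Suc i + j')) xs ! l' = xs ! (Suc (Suc i + j') + l')" "Suc (Suc i + j') + l' < length xs"
    using l(1) unfolding e2 by auto
  have "i < Suc i + j'" "Suc i + j' < Suc (Suc i + j') + l'" by auto
  then show ?thesis using i(2) j(2) l(2) d1 d2 unfolding e2 by metis
qed

lemma vc132: "vcontains L ([1,3,2],{}) \<longleftrightarrow> (\<exists>i j l. i < j \<and> j < l \<and> l < length L \<and> L!i < L!l \<and> L!l < L!j)"
proof
  assume "vcontains L ([1,3,2],{})"
  then obtain f where f: "strict_mono_on {0..<length [1::nat,3,2]} f" "\<forall>i<length [1::nat,3,2]. f i < length L"
    "\<forall>i<length [1::nat,3,2]. \<forall>j<length [1::nat,3,2]. (L ! f i < L ! f j \<longleftrightarrow> [1::nat,3,2] ! i < [1,3,2] ! j)"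
    by (rule vcontainsE)
  have "f 0 < f 1" "f 1 < f 2" using smD[OF f(1), of 0 1] smD[OF f(1), of 1 2] by simp_all
  moreover have "f 2 < length L" using f(2) by simp
  moreover have "L ! f 0 < L ! f 2" "L ! f 2 < L ! f 1" using f(3) by (simp_all add: all3)
  ultimately show "\<exists>i j l. i < j \<and> j < l \<and> l < length L \<and> L!i < L!l \<and> L!l < L!j" by blast
next
  assume "\<exists>i j l. i < j \<and> j < l \<and> l < length L \<and> L!i < L!l \<and> L!l < L!j"
  then obtain i j l where ij: "i < j" "j < l" "l < length L" "L!i < L!l" "L!l < L!j" by blast
  show "vcontains L ([1,3,2],{})"
    apply (rule vcontainsI[where f="\<lambda>t. if t = 0 then i else if t = 1 then j else l"])
    subgoal by (rule smI) (use ij in \<open>auto simp: less_Suc_eq numeral_3_eq_3\<close>)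
    subgoal using ij by (simp add: all3)
    subgoal using ij by (auto simp: all3)
    subgoal by simp
    done
qed

lemma vc132_c231: "vcontains L ([1,3,2],{}) \<longleftrightarrow> c231s (rev L)"
proof
  assume "vcontains L ([1,3,2],{})"
  then have "\<exists>i j l. i < j \<and> j < l \<and> l < length L \<and> L!i < L!l \<and> L!l < L!j" unfolding vc132 .
  then obtain i j l where ij: "i < j" "j < l" "l < length L" "L!i < L!l" "L!l < L!j"
    by blast
  have "subseq [L!i, L!j, L!l] L" by (rule pos3[OF ij(1-3)])
  then have "subseq (rev [L!i, L!j, L!l]) (rev L)" by (rule subseq_rev)
  then have "subseq [L!l, L!j, L!i] (rev L)" by simp
  then show "c231s (rev L)" unfolding c231s_def using ij(4,5) by (intro exI[of _ "L!i"] exI[of _ "L!l"] exI[of _ "L!j"]) simp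
next
  assume "c231s (rev L)"
  then have "\<exists>a b c. a < b \<and> b < c \<and> subseq [b,c,a] (rev L)" unfolding c231s_def .
  then obtain a b c where abc: "a < b" "b < c" "subseq [b,c,a] (rev L)" by blast
  have "subseq (rev [b,c,a]) (rev (rev L))" by (rule subseq_rev[OF abc(3)])
  then have "subseq [a,c,b] L" by simp
  then have "\<exists>i j l. i < j \<and> j < l \<and> l < length L \<and> L!i = a \<and> L!j = c \<and> L!l = b" by (rule pos3')
  then obtain i j l where ijl: "i < j" "j < l" "l < length L" "L!i = a" "L!j = c" "L!l = b"
    by blast
  have "\<exists>i j l. i < j \<and> j < l \<and> l < length L \<and> L!i < L!l \<and> L!l < L!j"
    apply (rule exI[of _ i], rule exI[of _ j], rule exI[of _ l]) using ijl abc by simp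
  then show "vcontains L ([1,3,2],{})" unfolding vc132 .
qed

lemma vrev_iff:
  assumes U: "U \<subseteq> {0..<length p}"
  shows "vcontains (rev xs) (p,U) \<longleftrightarrow> vcontains xs (vrev (p,U))"
proof
  assume "vcontains (rev xs) (p,U)"
  then show "vcontains xs (vrev (p,U))" using vc_rev[OF U, of "rev xs"] by (simp add: vrev_def)
next
  assume h: "vcontains xs (vrev (p,U))"
  have U2: "(\<lambda>i. length p - 1 - i) ` U \<subseteq> {0..<length (rev p)}" using U by force
  have "vcontains (rev xs) (rev (rev p), (\<lambda>i. length (rev p) - 1 - i) ` ((\<lambda>i. length p - 1 - i) ` U))"
    using vc_rev[OF U2, of xs] h by (simp add: vrev_def)
  moreover have "(\<lambda>i. length (rev p) - 1 - i) ` ((\<lambda>i. length p - 1 - i) ` U) = U"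
  proof -
    have "(\<lambda>i. length (rev p) - 1 - i) ` ((\<lambda>i. length p - 1 - i) ` U) = (\<lambda>i. i) ` U"
      unfolding image_image by (rule image_cong[OF refl]) (use U in auto)
    then show ?thesis by simp
  qed
  ultimately show "vcontains (rev xs) (p,U)" by simp
qed

lemma revp_nth: "i < k \<Longrightarrow> rev [1..<k+1] ! i = k - i"
proof -
  assume i: "i < k"
  have "rev [1..<k+1] ! i = [1..<k+1] ! (length [1..<k+1] - Suc i)" using i by (simp add: rev_nth del: upt_Suc)
  also have "\<dots> = k - i" using i by (simp del: upt_Suc)
  finally show ?thesis .
qed

lemma west_iff:
  assumes m: "mset L = mset [1..<n+1]"
  shows "west_s L = [1..<n+1] \<longleftrightarrow> sorted (west_s L)"
proof
  assume "west_s L = [1..<n+1]" then show "sorted (west_s L)" by (simp del: upt_Suc)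
next
  assume s: "sorted (west_s L)"
  have "mset (west_s L) = mset [1..<n+1]" using m by (simp add: west_s_def SC_def mset_sc)
  then have "sort [1..<n+1] = west_s L" using s by (rule properties_for_sort)
  then show "west_s L = [1..<n+1]" by (simp add: sorted_sort_id del: upt_Suc)
qed

theorem mainTheorem4:
  fixes k n :: nat and U :: "nat set"
  assumes "k \<ge> 3" and "U \<subseteq> {0..<k}" and "n \<ge> 1"
  shows "Sort n (SC (rev [1..<k+1], U)) = Av n [vrev (rev [1..<k+1], U), ([1, 3, 2], {})]"
proof -
  define p where "p = rev [1..<k+1]"
  have lenp: "length p = k" by (simp add: p_def)
  have "2 < k" "1 < k" "0 < k" using assms(1) by auto
  then have "p!2 = k - 2" "p!1 = k - 1" "p!0 = k" unfolding p_def using revp_nth by presburger+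
  then have lp: "3 \<le> length p" "p!2 < p!1" "p!1 < p!0"
    using assms(1) lenp by auto
  have U: "U \<subseteq> {0..<length p}" using assms(2) lenp by simp
  have key: "west_s (SC (p,U) \<tau>) = [1..<n+1] \<longleftrightarrow> vavoids \<tau> (vrev (p,U)) \<and> vavoids \<tau> ([1,3,2],{})"
    if t: "\<tau> \<in> perms n" for \<tau>
  proof -
    have d: "distinct \<tau>" "set \<tau> = {1..n}" using t unfolding perms_def by auto
    have "set [1..<n+1] = {1..n}" by (simp only: set_upt) auto
    then have mt: "mset \<tau> = mset [1..<n+1]"
      using d set_eq_iff_mset_eq_distinct[of \<tau> "[1..<n+1]"] distinct_upt by metis
    show ?thesis
    proof (cases "vcontains \<tau> (vrev (p,U))")
      case True
      then have c: "vcontains (rev \<tau> @ []) (p,U)" using vrev_iff[OF U, of \<tau>] by simp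
      have a0: "vavoids [] (p,U)" using vc_len3[of "[]" p U] lp by (auto simp: vavoids_def)
      have "c231s (sc_aux (p,U) \<tau> [])" by (rule lemB[OF lp a0 c])
      then have "\<not> sorted (west_s (SC (p,U) \<tau>))" by (simp add: knuth SC_def)
      then have "west_s (SC (p,U) \<tau>) \<noteq> [1..<n+1]" by (metis sorted_upt)
      then show ?thesis using True by (simp add: vavoids_def)
    next
      case False
      then have "vavoids (rev \<tau> @ []) (p,U)" using vrev_iff[OF U, of \<tau>] by (simp add: vavoids_def)
      then have e: "SC (p,U) \<tau> = rev \<tau>" unfolding SC_def using nopop by fastforce
      have m2: "mset (rev \<tau>) = mset [1..<n+1]" using mt by simp
      have "west_s (SC (p,U) \<tau>) = [1..<n+1] \<longleftrightarrow> \<not> c231s (rev \<tau>)"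
        unfolding e west_iff[OF m2] knuth ..
      also have "\<dots> \<longleftrightarrow> vavoids \<tau> ([1,3,2],{})" unfolding vavoids_def vc132_c231 ..
      finally show ?thesis using False by (simp add: vavoids_def)
    qed
  qed
  show ?thesis
    unfolding Sort_def Av_def p_def[symmetric] using key by auto
qed

end
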